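(* Let $X$ and $Y$ be discrete random variables with finite support. Let $\mathbf{p}$ be the distribution of $X$ and $\mathbf{q}$ the distribution of $Y$, each written as a vector sorted in nonincreasing order, with the shorter vector padded with zeros to the common length. If $H(Y\mid X)=0$, then $$H(X)\geq H(Y)+D(\mathbf{q}\,\|\,\mathbf{p}).$$ Equivalently, for every function $f$ one has $H(X)\geq H(f(X))+D(\mathbf{q}\|\mathbf{p})$, where $\mathbf{q}$ is the sorted distribution of $f(X)$.
   Context: $H$ denotes Shannon entropy in bits. $D(\mathbf{b}\|\mathbf{a})=\sum_i b_i\log_2(b_i/a_i)$ is the relative entropy, computed componentwise on the sorted and padded vectors, with the convention $0\log(0/a)=0$. *)

theory Defs
  imports "HOL-Probability.Probability" "HOL-Library.Multiset"
begin

definition shannon_entropy :: "'a pmf \<Rightarrow> real" where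
  "shannon_entropy p = - (\<Sum>x\<in>set_pmf p. pmf p x * log 2 (pmf p x))"

definition cond_entropy :: "('a \<times> 'b) pmf \<Rightarrow> real" where
  "cond_entropy J = - (\<Sum>xy\<in>set_pmf J.
      pmf J xy * log 2 (pmf J xy / pmf (map_pmf fst J) (fst xy)))"

definition sorted_probs :: "'a pmf \<Rightarrow> real list" where
  "sorted_probs p = rev (sorted_list_of_multiset (image_mset (pmf p) (mset_set (set_pmf p))))"

definition sorted_vec :: "'a pmf \<Rightarrow> nat \<Rightarrow> real" where
  "sorted_vec p i = (if i < length (sorted_probs p) then sorted_probs p ! i else 0)"

definition rel_entropy :: "(nat \<Rightarrow> real) \<Rightarrow> (nat \<Rightarrow> real) \<Rightarrow> nat \<Rightarrow> real" where
  "rel_entropy b a n = (\<Sum>i<n. if b i = 0 then 0 else b i * log 2 (b i / a i))"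

end

theory Submission imports Defs "HOL-Combinatorics.List_Permutation" begin


lemma pmf_map_finite:
  assumes "finite (set_pmf J)"
  shows "pmf (map_pmf g J) z = (\<Sum>u\<in>{u\<in>set_pmf J. g u = z}. pmf J u)"
proof -
  have "pmf (map_pmf g J) z = measure J (g -` {z} \<inter> set_pmf J)"
    by (simp add: pmf_map measure_Int_set_pmf)
  also have "g -` {z} \<inter> set_pmf J = {u\<in>set_pmf J. g u = z}" by auto
  also have "measure J {u\<in>set_pmf J. g u = z} = (\<Sum>u\<in>{u\<in>set_pmf J. g u = z}. pmf J u)"
    using assms by (intro measure_measure_pmf_finite) auto
  finally show ?thesis .
qed

lemma sorted_probs_bij:
  assumes "finite (set_pmf p)"
  shows "\<exists>\<sigma>. bij_betw \<sigma> {..<card (set_pmf p)} (set_pmf p) \<and>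
     (\<forall>i<card (set_pmf p). sorted_probs p ! i = pmf p (\<sigma> i)) \<and>
     length (sorted_probs p) = card (set_pmf p)"
proof -
  obtain xs where xs: "distinct xs" "set xs = set_pmf p"
    using finite_distinct_list[OF assms] by blast
  have len: "length xs = card (set_pmf p)" using xs distinct_card by fastforce
  have "mset (sorted_probs p) = image_mset (pmf p) (mset_set (set_pmf p))"
    by (simp add: sorted_probs_def)
  also have "\<dots> = mset (map (pmf p) xs)" using xs by (simp add: mset_set_set[symmetric])
  finally have m: "mset (sorted_probs p) = mset (map (pmf p) xs)" .
  then have l: "length (sorted_probs p) = card (set_pmf p)"
    using len by (metis length_map mset_eq_length)
  from permutation_Ex_bij[of "sorted_probs p" "map (pmf p) xs"] m
  obtain f where f: "bij_betw f {..<length (sorted_probs p)} {..<length (map (pmf p) xs)}"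
      "\<forall>i<length (sorted_probs p). sorted_probs p ! i = map (pmf p) xs ! f i"
    by auto
  have "bij_betw ((!) xs \<circ> f) {..<card (set_pmf p)} (set_pmf p)"
    using f(1) l len bij_betw_nth[OF xs(1) refl xs(2)[symmetric]]
    by (metis bij_betw_trans length_map)
  moreover have "\<forall>i<card (set_pmf p). sorted_probs p ! i = pmf p (((!) xs \<circ> f) i)"
    using f l len by (metis (no_types, lifting) bij_betwE comp_apply lessThan_iff length_map nth_map)
  ultimately show ?thesis using l by blast
qed

lemma sorted_probs_desc:
  assumes "i \<le> j" "j < length (sorted_probs p)"
  shows "sorted_probs p ! j \<le> sorted_probs p ! i"
proof -
  let ?L = "sorted_list_of_multiset (image_mset (pmf p) (mset_set (set_pmf p)))"
  have s: "sorted ?L" by simp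
  have "sorted_probs p = rev ?L" by (simp add: sorted_probs_def)
  then show ?thesis using assms s
    by (simp add: rev_nth sorted_nth_mono)
qed



lemma sum_subset_le_prefix:
  fixes b :: "nat \<Rightarrow> real"
  assumes dec: "\<And>i j. i \<le> j \<Longrightarrow> j < n \<Longrightarrow> b j \<le> b i"
  shows "I \<subseteq> {..<n} \<Longrightarrow> card I = k \<Longrightarrow> sum b I \<le> sum b {..<k}"
proof (induction k arbitrary: I)
  case 0
  then have "I = {}" using finite_subset[of I "{..<n}"] by auto
  then show ?case by simp
next
  case (Suc k)
  have fin: "finite I" using Suc.prems finite_subset by blast
  then have ne: "I \<noteq> {}" using Suc.prems by auto
  define M where "M = Max I"
  have MI: "M \<in> I" using fin ne M_def by simp
  have "I \<subseteq> {..M}" using fin M_def by auto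
  then have "card I \<le> Suc M" using card_mono[of "{..M}" I] by simp
  then have kM: "k \<le> M" using Suc.prems by simp
  have Mn: "M < n" using MI Suc.prems by auto
  have c: "card (I - {M}) = k" using Suc.prems MI fin by simp
  have "sum b (I - {M}) \<le> sum b {..<k}" using Suc.IH[of "I - {M}"] c Suc.prems by blast
  moreover have "b M \<le> b k" using dec kM Mn by blast
  moreover have "sum b I = b M + sum b (I - {M})" using fin MI by (simp add: sum.remove)
  ultimately show ?case by simp
qed

lemma rearr:
  fixes b :: "nat \<Rightarrow> real"
  assumes dec: "\<And>i j. i \<le> j \<Longrightarrow> j < n \<Longrightarrow> b j \<le> b i"
  shows "\<forall>Q h. (\<forall>i j. i \<le> j \<longrightarrow> j < m \<longrightarrow> Q j \<le> (Q i::real)) \<longrightarrow> (\<forall>j<m. 0 \<le> Q j)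
     \<longrightarrow> inj_on h {..<m} \<longrightarrow> h ` {..<m} \<subseteq> {..<n}
     \<longrightarrow> (\<Sum>j<m. Q j * b (h j)) \<le> (\<Sum>j<m. Q j * b j)"
proof (induction m)
  case 0
  then show ?case by simp
next
  case (Suc k)
  show ?case
  proof (intro allI impI)
    fix Q :: "nat \<Rightarrow> real" and h
    assume Qd: "\<forall>i j. i \<le> j \<longrightarrow> j < Suc k \<longrightarrow> Q j \<le> Q i" and Qn: "\<forall>j<Suc k. 0 \<le> Q j"
      and hi: "inj_on h {..<Suc k}" and hr: "h ` {..<Suc k} \<subseteq> {..<n}"
    define Q' where "Q' j = Q j - Q k" for j
    have decomp: "(\<Sum>j<Suc k. Q j * c j) = Q k * (\<Sum>j<Suc k. c j) + (\<Sum>j<k. Q' j * c j)" for c :: "nat \<Rightarrow> real"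
      by (simp add: Q'_def left_diff_distrib sum_subtractf sum_distrib_left algebra_simps)
    have IH: "(\<Sum>j<k. Q' j * b (h j)) \<le> (\<Sum>j<k. Q' j * b j)"
    proof -
      have "\<forall>i j. i \<le> j \<longrightarrow> j < k \<longrightarrow> Q' j \<le> Q' i" using Qd by (simp add: Q'_def)
      moreover have "\<forall>j<k. 0 \<le> Q' j" using Qd by (simp add: Q'_def)
      moreover have "inj_on h {..<k}" using hi by (rule inj_on_subset) auto
      moreover have "h ` {..<k} \<subseteq> {..<n}" using hr by (meson dual_order.trans image_mono lessThan_subset_iff less_imp_le_nat lessI)
      ultimately show ?thesis using Suc.IH by blast
    qed
    have "(\<Sum>j<Suc k. b (h j)) = sum b (h ` {..<Suc k})"
      using hi by (simp add: sum.reindex)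
    also have "\<dots> \<le> sum b {..<Suc k}"
    proof -
      have "card (h ` {..<Suc k}) = Suc k" using hi by (simp add: card_image)
      then show ?thesis using sum_subset_le_prefix[of n b "h ` {..<Suc k}" "Suc k"] dec hr by blast
    qed
    finally have "Q k * (\<Sum>j<Suc k. b (h j)) \<le> Q k * (\<Sum>j<Suc k. b j)"
      using Qn by (intro mult_left_mono) auto
    then show "(\<Sum>j<Suc k. Q j * b (h j)) \<le> (\<Sum>j<Suc k. Q j * b j)"
      using IH decomp[of "\<lambda>j. b (h j)"] decomp[of b] by linarith
  qed
qed


theorem corollary2:
  fixes J :: "('a \<times> 'b) pmf"
  assumes "finite (set_pmf J)"
    and "cond_entropy J = 0"
  shows "shannon_entropy (map_pmf fst J) \<ge>
           shannon_entropy (map_pmf snd J)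
           + rel_entropy (sorted_vec (map_pmf snd J)) (sorted_vec (map_pmf fst J))
               (max (card (set_pmf (map_pmf fst J))) (card (set_pmf (map_pmf snd J))))"
proof -
  define S where "S = set_pmf J"
  define P where "P = map_pmf fst J"
  define Q where "Q = map_pmf snd J"
  define A where "A = set_pmf P"
  define B where "B = set_pmf Q"
  have finS: "finite S" using assms(1) S_def by simp
  have A_eq: "A = fst ` S" by (simp add: A_def P_def S_def)
  have finA: "finite A" using finS A_eq by simp
  have pP: "pmf P x = (\<Sum>u\<in>{u\<in>S. fst u = x}. pmf J u)" for x
    unfolding P_def S_def by (rule pmf_map_finite[OF assms(1)])
  have ppos: "x \<in> A \<Longrightarrow> 0 < pmf P x" for x by (simp add: A_def pmf_positive)
  have ge: "u \<in> S \<Longrightarrow> pmf J u \<le> pmf P (fst u)" for u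
    unfolding pP using finS by (intro member_le_sum) auto
  define t where "t u = pmf J u * log 2 (pmf J u / pmf P (fst u))" for u
  have tle: "u \<in> S \<Longrightarrow> t u \<le> 0" for u
  proof -
    assume uS: "u \<in> S"
    have pos: "0 < pmf J u" using uS S_def by (simp add: pmf_positive)
    have "pmf J u / pmf P (fst u) \<le> 1" using ge[OF uS] pos by simp
    moreover have "0 < pmf J u / pmf P (fst u)" using ge[OF uS] pos by simp
    ultimately have "log 2 (pmf J u / pmf P (fst u)) \<le> 0" by simp
    then show ?thesis unfolding t_def using pos by (simp add: mult_nonneg_nonpos)
  qed
  have "sum t S = 0" using assms(2) unfolding cond_entropy_def t_def S_def P_def by simp
  then have "sum (\<lambda>u. - t u) S = 0" by (simp add: sum_negf)
  then have t0: "u \<in> S \<Longrightarrow> t u = 0" for u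
    using sum_nonneg_eq_0_iff[OF finS, of "\<lambda>u. - t u"] tle by fastforce
  have eqP: "u \<in> S \<Longrightarrow> pmf J u = pmf P (fst u)" for u
  proof -
    assume uS: "u \<in> S"
    have pos: "0 < pmf J u" using uS S_def by (simp add: pmf_positive)
    have r: "0 < pmf J u / pmf P (fst u)" using ge[OF uS] pos by simp
    have "log 2 (pmf J u / pmf P (fst u)) = 0" using t0[OF uS] pos unfolding t_def by simp
    moreover have "pmf J u / pmf P (fst u) = 2 powr (log 2 (pmf J u / pmf P (fst u)))"
      using r by simp
    ultimately have "pmf J u / pmf P (fst u) = 1" by simp
    then show ?thesis by (simp add: divide_eq_1_iff)
  qed
  have func: "u \<in> S \<Longrightarrow> v \<in> S \<Longrightarrow> fst u = fst v \<Longrightarrow> u = v" for u v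
  proof (rule ccontr)
    assume uS: "u \<in> S" and vS: "v \<in> S" and f: "fst u = fst v" and ne: "u \<noteq> v"
    have "sum (pmf J) {u, v} \<le> (\<Sum>w\<in>{w\<in>S. fst w = fst u}. pmf J w)"
      using uS vS f finS by (intro sum_mono2) auto
    then have "pmf J u + pmf J v \<le> pmf P (fst u)" using ne pP by simp
    moreover have "pmf J v = pmf P (fst u)" using eqP[OF vS] f by simp
    moreover have "0 < pmf J u" using uS S_def by (simp add: pmf_positive)
    ultimately show False using eqP[OF uS] by simp
  qed
  define f where "f x = snd (SOME u. u \<in> S \<and> fst u = x)" for x
  have fprop: "u \<in> S \<Longrightarrow> snd u = f (fst u)" for u
  proof -
    assume uS: "u \<in> S"
    have "(SOME w. w \<in> S \<and> fst w = fst u) \<in> S \<and> fst (SOME w. w \<in> S \<and> fst w = fst u) = fst u"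
      by (rule someI[of _ u]) (simp add: uS)
    then have "(SOME w. w \<in> S \<and> fst w = fst u) = u" using func uS by blast
    then show ?thesis by (simp add: f_def)
  qed
  have QP: "Q = map_pmf f P"
  proof -
    have "Q = map_pmf (f \<circ> fst) J" unfolding Q_def
      by (rule map_pmf_cong) (auto simp: fprop S_def)
    then show ?thesis by (simp add: P_def map_pmf_comp comp_def)
  qed
  have B_eq: "B = f ` A" by (simp add: B_def A_def QP)
  have finB: "finite B" using finA B_eq by simp
  have qpos: "y \<in> B \<Longrightarrow> 0 < pmf Q y" for y by (simp add: B_def pmf_positive)
  have qsum: "pmf Q y = (\<Sum>x\<in>{x\<in>A. f x = y}. pmf P x)" for y
    unfolding QP A_def by (rule pmf_map_finite) (use finA A_def in simp)
  define n where "n = card A"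
  define m where "m = card B"
  have mn: "m \<le> n" unfolding m_def n_def B_eq using finA by (rule card_image_le)
  have "\<forall>y\<in>B. \<exists>z. z \<in> A \<and> f z = y \<and> (\<forall>x\<in>A. f x = y \<longrightarrow> pmf P x \<le> pmf P z)"
  proof
    fix y assume yB: "y \<in> B"
    define F where "F = {x\<in>A. f x = y}"
    have finF: "finite F" using finA F_def by simp
    have neF: "F \<noteq> {}" using yB B_eq F_def by auto
    have "Max (pmf P ` F) \<in> pmf P ` F" using finF neF by simp
    then obtain z where z: "z \<in> F" "pmf P z = Max (pmf P ` F)" by auto
    have "\<forall>x\<in>F. pmf P x \<le> pmf P z" using z finF by simp
    then show "\<exists>z. z \<in> A \<and> f z = y \<and> (\<forall>x\<in>A. f x = y \<longrightarrow> pmf P x \<le> pmf P z)"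
      using z F_def by blast
  qed
  then obtain g where g: "\<And>y. y \<in> B \<Longrightarrow> g y \<in> A \<and> f (g y) = y \<and> (\<forall>x\<in>A. f x = y \<longrightarrow> pmf P x \<le> pmf P (g y))"
    by metis
  have grp: "(\<Sum>x\<in>A. pmf P x * log 2 (pmf P x)) = (\<Sum>y\<in>B. \<Sum>x\<in>{x\<in>A. f x = y}. pmf P x * log 2 (pmf P x))"
    using sum.group[OF finA finB, of f "\<lambda>x. pmf P x * log 2 (pmf P x)"] B_eq by simp
  have fib: "(\<Sum>x\<in>{x\<in>A. f x = y}. pmf P x * log 2 (pmf P x)) \<le> pmf Q y * log 2 (pmf P (g y))"
    if yB: "y \<in> B" for y
  proof -
    have "(\<Sum>x\<in>{x\<in>A. f x = y}. pmf P x * log 2 (pmf P x)) \<le> (\<Sum>x\<in>{x\<in>A. f x = y}. pmf P x * log 2 (pmf P (g y)))"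
    proof (rule sum_mono)
      fix x assume x: "x \<in> {x\<in>A. f x = y}"
      have "log 2 (pmf P x) \<le> log 2 (pmf P (g y))" using g[OF yB] x ppos by simp
      then show "pmf P x * log 2 (pmf P x) \<le> pmf P x * log 2 (pmf P (g y))"
        by (intro mult_left_mono) auto
    qed
    also have "\<dots> = pmf Q y * log 2 (pmf P (g y))" by (simp add: qsum sum_distrib_right)
    finally show ?thesis .
  qed
  have step6: "(\<Sum>x\<in>A. pmf P x * log 2 (pmf P x)) \<le> (\<Sum>y\<in>B. pmf Q y * log 2 (pmf P (g y)))"
    unfolding grp by (rule sum_mono) (rule fib)
  obtain \<sigma> where \<sigma>: "bij_betw \<sigma> {..<n} A" "\<forall>i<n. sorted_probs P ! i = pmf P (\<sigma> i)"
     "length (sorted_probs P) = n"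
    using sorted_probs_bij[of P] finA unfolding A_def n_def by auto
  obtain \<tau> where \<tau>: "bij_betw \<tau> {..<m} B" "\<forall>i<m. sorted_probs Q ! i = pmf Q (\<tau> i)"
     "length (sorted_probs Q) = m"
    using sorted_probs_bij[of Q] finB unfolding B_def m_def by auto
  define LP where "LP i = sorted_probs P ! i" for i
  define LQ where "LQ i = sorted_probs Q ! i" for i
  have LPpos: "i < n \<Longrightarrow> 0 < LP i" for i using \<sigma> ppos unfolding LP_def by (auto dest: bij_betwE)
  have LQpos: "i < m \<Longrightarrow> 0 < LQ i" for i using \<tau> qpos unfolding LQ_def by (auto dest: bij_betwE)
  define h where "h j = inv_into {..<n} \<sigma> (g (\<tau> j))" for j
  have \<tau>B: "j < m \<Longrightarrow> \<tau> j \<in> B" for j using \<tau>(1) by (auto dest: bij_betwE)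
  have hprop: "j < m \<Longrightarrow> h j < n \<and> \<sigma> (h j) = g (\<tau> j)" for j
  proof -
    assume j: "j < m"
    have "g (\<tau> j) \<in> A" using g \<tau>B[OF j] by blast
    then show ?thesis unfolding h_def using \<sigma>(1)
      by (metis bij_betw_def f_inv_into_f inv_into_into lessThan_iff)
  qed
  have hinj: "inj_on h {..<m}"
  proof (rule inj_onI)
    fix i j assume i: "i \<in> {..<m}" and j: "j \<in> {..<m}" and e: "h i = h j"
    then have "g (\<tau> i) = g (\<tau> j)" using hprop by (metis lessThan_iff)
    then have "\<tau> i = \<tau> j" using g \<tau>B i j by (metis lessThan_iff)
    then show "i = j" using \<tau>(1) i j by (auto simp: bij_betw_def inj_on_def)
  qed
  have hr: "h ` {..<m} \<subseteq> {..<n}" using hprop by auto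
  have s7: "(\<Sum>y\<in>B. pmf Q y * log 2 (pmf P (g y))) = (\<Sum>j<m. LQ j * log 2 (LP (h j)))"
  proof -
    have "(\<Sum>y\<in>B. pmf Q y * log 2 (pmf P (g y))) = (\<Sum>j<m. pmf Q (\<tau> j) * log 2 (pmf P (g (\<tau> j))))"
      using sum.reindex_bij_betw[OF \<tau>(1), of "\<lambda>y. pmf Q y * log 2 (pmf P (g y))"] by simp
    also have "\<dots> = (\<Sum>j<m. LQ j * log 2 (LP (h j)))"
      by (rule sum.cong) (use \<tau> \<sigma> hprop in \<open>auto simp: LQ_def LP_def\<close>)
    finally show ?thesis .
  qed
  have decb: "\<And>i j. i \<le> j \<Longrightarrow> j < n \<Longrightarrow> log 2 (LP j) \<le> log 2 (LP i)"
  proof -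
    fix i j :: nat assume "i \<le> j" "j < n"
    then show "log 2 (LP j) \<le> log 2 (LP i)"
      using sorted_probs_desc[of i j P] \<sigma>(3) LPpos[of i] LPpos[of j] unfolding LP_def by simp
  qed
  have decQ: "\<forall>i j. i \<le> j \<longrightarrow> j < m \<longrightarrow> LQ j \<le> LQ i"
    using sorted_probs_desc[of _ _ Q] \<tau>(3) unfolding LQ_def by blast
  have nnQ: "\<forall>j<m. 0 \<le> LQ j" using LQpos by (simp add: less_imp_le)
  have s8: "(\<Sum>j<m. LQ j * log 2 (LP (h j))) \<le> (\<Sum>j<m. LQ j * log 2 (LP j))"
    using rearr[of n "\<lambda>i. log 2 (LP i)" m, OF decb] decQ nnQ hinj hr by blast
  have HP: "shannon_entropy P = - (\<Sum>i<n. LP i * log 2 (LP i))"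
  proof -
    have "(\<Sum>x\<in>A. pmf P x * log 2 (pmf P x)) = (\<Sum>i<n. pmf P (\<sigma> i) * log 2 (pmf P (\<sigma> i)))"
      using sum.reindex_bij_betw[OF \<sigma>(1), of "\<lambda>x. pmf P x * log 2 (pmf P x)"] by simp
    also have "\<dots> = (\<Sum>i<n. LP i * log 2 (LP i))" using \<sigma>(2) by (simp add: LP_def)
    finally show ?thesis by (simp add: shannon_entropy_def A_def)
  qed
  have HPA: "(\<Sum>x\<in>A. pmf P x * log 2 (pmf P x)) = (\<Sum>i<n. LP i * log 2 (LP i))"
    using HP by (simp add: shannon_entropy_def A_def)
  have HQ: "shannon_entropy Q = - (\<Sum>i<m. LQ i * log 2 (LQ i))"
  proof -
    have "(\<Sum>x\<in>B. pmf Q x * log 2 (pmf Q x)) = (\<Sum>i<m. pmf Q (\<tau> i) * log 2 (pmf Q (\<tau> i)))"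
      using sum.reindex_bij_betw[OF \<tau>(1), of "\<lambda>x. pmf Q x * log 2 (pmf Q x)"] by simp
    also have "\<dots> = (\<Sum>i<m. LQ i * log 2 (LQ i))" using \<tau>(2) by (simp add: LQ_def)
    finally show ?thesis by (simp add: shannon_entropy_def B_def)
  qed
  have RE: "rel_entropy (sorted_vec Q) (sorted_vec P) n = (\<Sum>i<m. LQ i * log 2 (LQ i)) - (\<Sum>i<m. LQ i * log 2 (LP i))"
  proof -
    let ?F = "\<lambda>i. if sorted_vec Q i = 0 then 0 else sorted_vec Q i * log 2 (sorted_vec Q i / sorted_vec P i)"
    have "(\<Sum>i<n. ?F i) = (\<Sum>i<m. ?F i)"
      by (rule sum.mono_neutral_right) (use mn \<tau>(3) in \<open>auto simp: sorted_vec_def\<close>)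
    also have "\<dots> = (\<Sum>i<m. LQ i * log 2 (LQ i) - LQ i * log 2 (LP i))"
    proof (rule sum.cong)
      fix i assume "i \<in> {..<m}"
      then have i: "i < m" by simp
      then have "i < n" using mn by simp
      then show "?F i = LQ i * log 2 (LQ i) - LQ i * log 2 (LP i)"
        using i \<tau>(3) \<sigma>(3) LQpos[OF i] LPpos[of i]
        by (simp add: sorted_vec_def LQ_def LP_def log_divide right_diff_distrib)
    qed simp
    finally show ?thesis by (simp add: rel_entropy_def sum_subtractf)
  qed
  have mx: "max (card (set_pmf P)) (card (set_pmf Q)) = n"
    using mn by (simp add: n_def m_def A_def B_def)
  have "(\<Sum>i<n. LP i * log 2 (LP i)) \<le> (\<Sum>j<m. LQ j * log 2 (LP j))"
    using step6 s7 s8 HPA by linarith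
  then show ?thesis
    unfolding P_def[symmetric] Q_def[symmetric] mx HP HQ RE by linarith
qed

end
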